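(* Let $q$ be a prime number. Then the quasivariety $\mathcal{Q}(\mathbf{ŁV}_{q+1}\times\mathbf{ŁV}_2)$ is axiomatized by the axioms of MV-algebras, together with an identity (in one variable) axiomatizing the variety $\mathcal{V}(\mathbf{ŁV}_{q+1})$ relative to MV-algebras, together with the quasi-identity $$q(x\wedge\neg x)\approx1\ \Rightarrow\ y\vee\neg y\approx1.$$
   Context: MV-algebras are algebras $(A,\oplus,\neg,0)$ (with $1=\neg0$); $\mathbf{ŁV}_{n+1}$ is the MV-chain on $\{0,\frac1n,\dots,1\}$ with $\neg x=1-x$, $x\oplus y=\min\{1,x+y\}$; $x\vee y=\max$, $x\wedge y=\min$ in these chains (in general $x\vee y=\neg(\neg x\oplus y)\oplus y$, $x\wedge y=\neg(\neg x\vee\neg y)$). $qz$ denotes $z\oplus\cdots\oplus z$ ($q$ times). $\mathcal{Q}(K)$ and $\mathcal{V}(K)$ denote the quasivariety and the variety generated by $K$. *)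

theory Defs
  imports Main "HOL-Computational_Algebra.Primes" Complex_Main
begin

record 'a mvalg =
  carrier :: "'a set"
  oplus :: "'a \<Rightarrow> 'a \<Rightarrow> 'a"
  neg :: "'a \<Rightarrow> 'a"
  zero :: "'a"

definition mv_struct :: "'a mvalg \<Rightarrow> bool" where
  "mv_struct A \<longleftrightarrow> zero A \<in> carrier A \<and>
     (\<forall>x\<in>carrier A. neg A x \<in> carrier A) \<and>
     (\<forall>x\<in>carrier A. \<forall>y\<in>carrier A. oplus A x y \<in> carrier A)"

definition is_MV :: "'a mvalg \<Rightarrow> bool" where
  "is_MV A \<longleftrightarrow> mv_struct A \<and>
    (\<forall>x\<in>carrier A. \<forall>y\<in>carrier A. \<forall>z\<in>carrier A.
        oplus A x (oplus A y z) = oplus A (oplus A x y) z) \<and>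
    (\<forall>x\<in>carrier A. \<forall>y\<in>carrier A. oplus A x y = oplus A y x) \<and>
    (\<forall>x\<in>carrier A. oplus A x (zero A) = x) \<and>
    (\<forall>x\<in>carrier A. neg A (neg A x) = x) \<and>
    (\<forall>x\<in>carrier A. oplus A x (neg A (zero A)) = neg A (zero A)) \<and>
    (\<forall>x\<in>carrier A. \<forall>y\<in>carrier A.
        oplus A (neg A (oplus A (neg A x) y)) y = oplus A (neg A (oplus A (neg A y) x)) x)"

datatype mvterm = Var nat | Zero | Neg mvterm | Oplus mvterm mvterm

fun eval :: "'a mvalg \<Rightarrow> (nat \<Rightarrow> 'a) \<Rightarrow> mvterm \<Rightarrow> 'a" where
  "eval A v (Var i) = v i"
| "eval A v Zero = zero A"
| "eval A v (Neg t) = neg A (eval A v t)"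
| "eval A v (Oplus s t) = oplus A (eval A v s) (eval A v t)"

fun tvars :: "mvterm \<Rightarrow> nat set" where
  "tvars (Var i) = {i}"
| "tvars Zero = {}"
| "tvars (Neg t) = tvars t"
| "tvars (Oplus s t) = tvars s \<union> tvars t"

type_synonym mveq = "mvterm \<times> mvterm"
type_synonym mvqeq = "mveq list \<times> mveq"

definition holds_eq :: "'a mvalg \<Rightarrow> (nat \<Rightarrow> 'a) \<Rightarrow> mveq \<Rightarrow> bool" where
  "holds_eq A v e \<longleftrightarrow> eval A v (fst e) = eval A v (snd e)"

definition sat_q :: "'a mvalg \<Rightarrow> mvqeq \<Rightarrow> bool" where
  "sat_q A Q \<longleftrightarrow> (\<forall>v. (\<forall>i. v i \<in> carrier A) \<longrightarrow>
      (\<forall>e\<in>set (fst Q). holds_eq A v e) \<longrightarrow> holds_eq A v (snd Q))"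

definition sat_id :: "'a mvalg \<Rightarrow> mveq \<Rightarrow> bool" where
  "sat_id A e \<longleftrightarrow> sat_q A ([], e)"

text \<open>Membership of A in the quasivariety generated by B: A satisfies every
  quasi-identity valid in B (the smallest quasi-equational class containing B).\<close>
definition in_Q :: "'a mvalg \<Rightarrow> 'b mvalg \<Rightarrow> bool" where
  "in_Q A B \<longleftrightarrow> mv_struct A \<and> (\<forall>Q. sat_q B Q \<longrightarrow> sat_q A Q)"

text \<open>Membership of A in the variety generated by B: A satisfies every identity valid in B.\<close>
definition in_V :: "'a mvalg \<Rightarrow> 'b mvalg \<Rightarrow> bool" where
  "in_V A B \<longleftrightarrow> mv_struct A \<and> (\<forall>e. sat_id B e \<longrightarrow> sat_id A e)"

definition One :: mvterm where "One = Neg Zero"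
definition Join :: "mvterm \<Rightarrow> mvterm \<Rightarrow> mvterm" where
  "Join s t = Oplus (Neg (Oplus (Neg s) t)) t"
definition Meet :: "mvterm \<Rightarrow> mvterm \<Rightarrow> mvterm" where
  "Meet s t = Neg (Join (Neg s) (Neg t))"

fun tmult :: "nat \<Rightarrow> mvterm \<Rightarrow> mvterm" where
  "tmult 0 t = Zero"
| "tmult (Suc 0) t = t"
| "tmult (Suc (Suc n)) t = Oplus (tmult (Suc n) t) t"

section \<open>The chains \<L>V_{n+1} and the product\<close>

definition LV :: "nat \<Rightarrow> real mvalg" where
  "LV n = \<lparr> carrier = {real k / real n | k. k \<le> n},
            oplus = (\<lambda>x y. min 1 (x + y)), neg = (\<lambda>x. 1 - x), zero = 0 \<rparr>"

definition prod_alg :: "'a mvalg \<Rightarrow> 'b mvalg \<Rightarrow> ('a \<times> 'b) mvalg" where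
  "prod_alg A B = \<lparr> carrier = carrier A \<times> carrier B,
      oplus = (\<lambda>x y. (oplus A (fst x) (fst y), oplus B (snd x) (snd y))),
      neg = (\<lambda>x. (neg A (fst x), neg B (snd x))),
      zero = (zero A, zero B) \<rparr>"

definition qi5 :: "nat \<Rightarrow> mvqeq" where
  "qi5 q = ([(tmult q (Meet (Var 0) (Neg (Var 0))), One)],
            (Join (Var 1) (Neg (Var 1)), One))"

end

theory Submission
  imports Defs
begin


fun tsubst :: "(nat \<Rightarrow> mvterm) \<Rightarrow> mvterm \<Rightarrow> mvterm" where
  "tsubst \<sigma> (Var i) = \<sigma> i"
| "tsubst \<sigma> Zero = Zero"
| "tsubst \<sigma> (Neg t) = Neg (tsubst \<sigma> t)"
| "tsubst \<sigma> (Oplus s t) = Oplus (tsubst \<sigma> s) (tsubst \<sigma> t)"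

lemma eval_tsubst: "eval A v (tsubst \<sigma> t) = eval A (\<lambda>i. eval A v (\<sigma> i)) t"
  by (induction t) auto

lemma tsubst_tmult[simp]: "tsubst \<sigma> (tmult n t) = tmult n (tsubst \<sigma> t)"
  by (induction n t rule: tmult.induct) auto

lemma tsubst_defs[simp]: "tsubst \<sigma> One = One" "tsubst \<sigma> (Join a b) = Join (tsubst \<sigma> a) (tsubst \<sigma> b)"
  "tsubst \<sigma> (Meet a b) = Meet (tsubst \<sigma> a) (tsubst \<sigma> b)"
  by (simp_all add: One_def Join_def Meet_def)

lemma eval_cong_sub:
  assumes "\<And>i. eval A v (\<sigma> i) = eval A v (\<tau> i)"
  shows "eval A v (tsubst \<sigma> t) = eval A v (tsubst \<tau> t)"
  using assms by (simp add: eval_tsubst)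

lemma eval_vars: "(\<And>i. i \<in> tvars t \<Longrightarrow> v i = v' i) \<Longrightarrow> eval A v t = eval A v' t"
  by (induction t) auto

lemma eval_carrier: "mv_struct A \<Longrightarrow> (\<And>i. v i \<in> carrier A) \<Longrightarrow> eval A v t \<in> carrier A"
  by (induction t) (auto simp: mv_struct_def)

lemma eval_prod: "eval (prod_alg A B) u t = (eval A (fst \<circ> u) t, eval B (snd \<circ> u) t)"
  by (induction t) (auto simp: prod_alg_def)

lemma LV_ops[simp]: "oplus (LV n) = (\<lambda>x y. min 1 (x+y))" "neg (LV n) = (\<lambda>x. 1 - x)" "zero (LV n) = 0"
  by (simp_all add: LV_def)

lemma carrier_LV: "carrier (LV n) = {real k / real n | k. k \<le> n}"
  by (simp add: LV_def)

lemma eval_LV_indep: "eval (LV n) v t = eval (LV m) v t"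
  by (induction t) auto

lemma carrier01: "x \<in> carrier (LV n) \<Longrightarrow> 0 \<le> x \<and> x \<le> 1"
  by (auto simp: carrier_LV divide_le_eq_1)

lemma eval01: "(\<And>i. 0 \<le> v i \<and> v i \<le> 1) \<Longrightarrow> 0 \<le> eval (LV n) v t \<and> eval (LV n) v t \<le> 1"
  by (induction t) auto

lemma mv_struct_LV: "n > 0 \<Longrightarrow> mv_struct (LV n)"
proof -
  assume n: "n > 0"
  have a: "real (min n (k+l)) / real n = min 1 (real k / real n + real l / real n)" for k l
    using n by (auto simp: min_def add_divide_distrib[symmetric] divide_le_eq_1 le_divide_eq_1)
  have b: "real (n - k) / real n = 1 - real k / real n" if "k \<le> n" for k
    using n that by (simp add: of_nat_diff diff_divide_distrib)
  show ?thesis unfolding mv_struct_def carrier_LV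
  proof (intro conjI ballI)
    show "zero (LV n) \<in> {real k / real n |k. k \<le> n}" by (auto intro: exI[of _ 0])
    fix x assume "x \<in> {real k / real n |k. k \<le> n}"
    then obtain k where k: "x = real k / real n" "k \<le> n" by auto
    show "neg (LV n) x \<in> {real k / real n |k. k \<le> n}"
      using b[OF k(2)] k by (auto intro!: exI[of _ "n-k"])
    fix y assume "y \<in> {real k / real n |k. k \<le> n}"
    then obtain l where l: "y = real l / real n" "l \<le> n" by auto
    show "oplus (LV n) x y \<in> {real k / real n |k. k \<le> n}"
      using a[of k l] k l by (auto intro!: exI[of _ "min n (k+l)"])
  qed
qed

lemma eval_LV_tmult: "0 \<le> eval (LV n) v t \<Longrightarrow> eval (LV n) v t \<le> 1 \<Longrightarrow> eval (LV n) v (tmult k t) = min 1 (real k * eval (LV n) v t)"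
  by (induction k t rule: tmult.induct) (auto simp: min_def algebra_simps)

lemma eval_LV_One[simp]: "eval (LV n) v One = 1" by (simp add: One_def)

lemma eval_LV_Join: "0 \<le> eval (LV n) v a \<Longrightarrow> eval (LV n) v a \<le> 1 \<Longrightarrow> 0 \<le> eval (LV n) v b \<Longrightarrow> eval (LV n) v b \<le> 1
  \<Longrightarrow> eval (LV n) v (Join a b) = max (eval (LV n) v a) (eval (LV n) v b)"
  by (auto simp: Join_def min_def max_def)

lemma eval_LV_Meet: "0 \<le> eval (LV n) v a \<Longrightarrow> eval (LV n) v a \<le> 1 \<Longrightarrow> 0 \<le> eval (LV n) v b \<Longrightarrow> eval (LV n) v b \<le> 1
  \<Longrightarrow> eval (LV n) v (Meet a b) = min (eval (LV n) v a) (eval (LV n) v b)"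
  by (auto simp: Meet_def Join_def min_def max_def)

definition dist :: "mvterm \<Rightarrow> mvterm \<Rightarrow> mvterm" where
  "dist x y = Oplus (Neg (Oplus (Neg x) y)) (Neg (Oplus (Neg y) x))"
definition eqt :: "nat \<Rightarrow> mvterm \<Rightarrow> mvterm \<Rightarrow> mvterm" where
  "eqt q x y = Neg (tmult q (dist x y))"
fun Pt :: "nat \<Rightarrow> mveq list \<Rightarrow> mvterm" where
  "Pt q [] = One"
| "Pt q (p # ps) = Meet (eqt q (fst p) (snd p)) (Pt q ps)"
definition ite :: "mvterm \<Rightarrow> mvterm \<Rightarrow> mvterm \<Rightarrow> mvterm" where
  "ite b x y = Join (Meet b x) (Meet (Neg b) y)"
definition wt :: "nat \<Rightarrow> mvterm \<Rightarrow> mvterm" where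
  "wt q y = tmult q (Meet y (Neg y))"
fun zt :: "nat \<Rightarrow> nat \<Rightarrow> mvterm" where
  "zt q 0 = Zero"
| "zt q (Suc k) = ite (wt q (Var k)) (Var k) (zt q k)"

lemma tsubst_defs2[simp]: "tsubst \<sigma> (dist a b) = dist (tsubst \<sigma> a) (tsubst \<sigma> b)"
  "tsubst \<sigma> (eqt q a b) = eqt q (tsubst \<sigma> a) (tsubst \<sigma> b)"
  "tsubst \<sigma> (ite c a b) = ite (tsubst \<sigma> c) (tsubst \<sigma> a) (tsubst \<sigma> b)"
  "tsubst \<sigma> (wt q a) = wt q (tsubst \<sigma> a)"
  by (simp_all add: dist_def eqt_def ite_def wt_def)

lemma eval_LV_dist: "0 \<le> eval (LV n) v a \<Longrightarrow> eval (LV n) v a \<le> 1 \<Longrightarrow> 0 \<le> eval (LV n) v b \<Longrightarrow> eval (LV n) v b \<le> 1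
  \<Longrightarrow> eval (LV n) v (dist a b) = \<bar>eval (LV n) v a - eval (LV n) v b\<bar>"
  by (auto simp: dist_def min_def)

lemma grid_dist:
  assumes "0 < q" "a \<in> carrier (LV q)" "b \<in> carrier (LV q)"
  shows "min 1 (real q * \<bar>a - b\<bar>) = (if a = b then 0 else 1)"
proof -
  obtain k l where kl: "a = real k / real q" "b = real l / real q" using assms by (auto simp: carrier_LV)
  have "real q * \<bar>a - b\<bar> = \<bar>real k - real l\<bar>"
    using assms(1) by (simp add: kl diff_divide_distrib[symmetric] abs_divide)
  moreover have "a \<noteq> b \<Longrightarrow> \<bar>real k - real l\<bar> \<ge> 1" using kl by auto
  ultimately show ?thesis by auto
qed

lemma grid_mid:
  assumes "0 < q" "a \<in> carrier (LV q)"
  shows "min 1 (real q * min a (1 - a)) = (if a = 0 \<or> a = 1 then 0 else 1)"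
proof -
  obtain k where k: "a = real k / real q" "k \<le> q" using assms by (auto simp: carrier_LV)
  have qa: "real q * a = real k" using assms(1) k by simp
  have e: "real q * min a (1 - a) = min (real k) (real q - real k)"
  proof (cases "a \<le> 1 - a")
    case True
    have "real q * a \<le> real q * (1 - a)" using True by (intro mult_left_mono) auto
    then show ?thesis using True qa by (auto simp: min_def algebra_simps)
  next
    case False
    have "real q * a \<ge> real q * (1 - a)" using False by (intro mult_left_mono) auto
    then show ?thesis using False qa by (auto simp: min_def algebra_simps)
  qed
  have "a \<noteq> 0 \<Longrightarrow> a \<noteq> 1 \<Longrightarrow> min (real k) (real q - real k) \<ge> 1"
    using k assms(1) by (auto simp: min_def)
  moreover have "a = 0 \<or> a = 1 \<Longrightarrow> min (real k) (real q - real k) = 0"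
    using k assms(1) by (auto simp: min_def)
  ultimately show ?thesis using e by auto
qed

context
  fixes q :: nat and x :: "nat \<Rightarrow> real"
  assumes q: "0 < q" and x: "\<And>i. x i \<in> carrier (LV q)"
begin

lemma ev_car: "eval (LV q) x t \<in> carrier (LV q)"
  using eval_carrier[OF mv_struct_LV[OF q] x] .

lemma ev01: "0 \<le> eval (LV q) x t" "eval (LV q) x t \<le> 1"
  using carrier01[OF ev_car] by auto

lemma ev_eqt: "eval (LV q) x (eqt q a b) = (if eval (LV q) x a = eval (LV q) x b then 1 else 0)"
proof -
  have "eval (LV q) x (eqt q a b) = 1 - min 1 (real q * \<bar>eval (LV q) x a - eval (LV q) x b\<bar>)"
  proof -
    have d: "eval (LV q) x (dist a b) = \<bar>eval (LV q) x a - eval (LV q) x b\<bar>"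
      using ev01 by (simp add: eval_LV_dist)
    show ?thesis unfolding eqt_def using ev01[of "dist a b"]
      by (simp only: eval.simps(3) LV_ops, subst eval_LV_tmult) (auto simp: d ev01)
  qed
  then show ?thesis using grid_dist[OF q ev_car ev_car] by simp
qed

lemma ev_wt: "eval (LV q) x (wt q a) = (if eval (LV q) x a = 0 \<or> eval (LV q) x a = 1 then 0 else 1)"
proof -
  have "eval (LV q) x (wt q a) = min 1 (real q * min (eval (LV q) x a) (1 - eval (LV q) x a))"
    unfolding wt_def using ev01 by (subst eval_LV_tmult) (auto simp: eval_LV_Meet)
  then show ?thesis using grid_mid[OF q ev_car] by simp
qed

lemma ev_ite: "eval (LV q) x c = 1 \<or> eval (LV q) x c = 0 \<Longrightarrow>
   eval (LV q) x (ite c a b) = (if eval (LV q) x c = 1 then eval (LV q) x a else eval (LV q) x b)"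
  unfolding ite_def using ev01 by (auto simp: eval_LV_Join eval_LV_Meet)

lemma ev_Pt: "eval (LV q) x (Pt q ps) = (if \<forall>p\<in>set ps. holds_eq (LV q) x p then 1 else 0)"
  by (induction ps) (auto simp: eval_LV_Meet ev_eqt ev01 holds_eq_def)

lemma ev_zt: "\<exists>j<N. x j \<noteq> 0 \<and> x j \<noteq> 1 \<Longrightarrow> eval (LV q) x (zt q N) \<noteq> 0 \<and> eval (LV q) x (zt q N) \<noteq> 1"
proof (induction N)
  case 0 then show ?case by simp
next
  case (Suc k)
  show ?case
  proof (cases "x k = 0 \<or> x k = 1")
    case True
    then have "\<exists>j<k. x j \<noteq> 0 \<and> x j \<noteq> 1" using Suc.prems less_Suc_eq by auto
    then show ?thesis using Suc.IH True by (simp add: ev_ite ev_wt)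
  next
    case False
    then show ?thesis by (simp add: ev_ite ev_wt)
  qed
qed

end


definition valid01 :: "mveq \<Rightarrow> bool" where
  "valid01 e \<longleftrightarrow> (\<forall>v. (\<forall>i. 0 \<le> v i \<and> v i \<le> 1) \<longrightarrow> eval (LV 1) v (fst e) = eval (LV 1) v (snd e))"

lemma valid01I: "(\<And>v. 0 \<le> v 0 \<Longrightarrow> v 0 \<le> 1 \<Longrightarrow> 0 \<le> v 1 \<Longrightarrow> v 1 \<le> 1 \<Longrightarrow> 0 \<le> v 2 \<Longrightarrow> v 2 \<le> 1 \<Longrightarrow>
   eval (LV 1) v (fst e) = eval (LV 1) v (snd e)) \<Longrightarrow> valid01 e"
  unfolding valid01_def by auto

lemma valid01_LV: "valid01 e \<Longrightarrow> sat_id (LV n) e"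
  unfolding sat_id_def sat_q_def holds_eq_def
proof (intro allI impI)
  fix v :: "nat \<Rightarrow> real" assume e: "valid01 e" and v: "\<forall>i. v i \<in> carrier (LV n)"
  then have "\<forall>i. 0 \<le> v i \<and> v i \<le> 1" using carrier01 by blast
  then have "eval (LV 1) v (fst e) = eval (LV 1) v (snd e)" using e unfolding valid01_def by blast
  then show "eval (LV n) v (fst (snd ([], e))) = eval (LV n) v (snd (snd ([], e)))"
    by (metis eval_LV_indep snd_conv)
qed

lemma valid01_B: "valid01 e \<Longrightarrow> sat_q (prod_alg (LV n) (LV m)) ([], e)"
  unfolding sat_q_def holds_eq_def
proof (intro allI impI)
  fix u :: "nat \<Rightarrow> real \<times> real"
  assume e: "valid01 e" and u: "\<forall>i. u i \<in> carrier (prod_alg (LV n) (LV m))"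
  have "\<forall>i. 0 \<le> (fst \<circ> u) i \<and> (fst \<circ> u) i \<le> 1" "\<forall>i. 0 \<le> (snd \<circ> u) i \<and> (snd \<circ> u) i \<le> 1"
    using u carrier01 by (force simp: prod_alg_def mem_Times_iff)+
  then show "eval (prod_alg (LV n) (LV m)) u (fst (snd ([], e))) = eval (prod_alg (LV n) (LV m)) u (snd (snd ([], e)))"
    using e unfolding valid01_def eval_prod
    by (simp add: eval_LV_indep[of n _ _ 1] eval_LV_indep[of m _ _ 1])
qed

lemma LV1_sub: "0 < q \<Longrightarrow> carrier (LV 1) \<subseteq> carrier (LV q)"
  unfolding carrier_LV
proof
  fix y assume q: "0 < q" and "y \<in> {real k / real 1 |k. k \<le> 1}"
  then have "y = 0 \<or> y = 1" by auto
  then show "y \<in> {real k / real q |k. k \<le> q}"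
    using q by (auto intro: exI[of _ 0] exI[of _ q])
qed

lemma LV1_car: "carrier (LV 1) = {0, 1}"
proof -
  have "{real k / real 1 |k. k \<le> 1} = {0,1}"
    by (auto simp: le_Suc_eq intro: exI[of _ 0] exI[of _ 1])
  then show ?thesis by (simp add: carrier_LV)
qed

lemma satid_B: "0 < q \<Longrightarrow> sat_id (LV q) e \<Longrightarrow> sat_q (prod_alg (LV q) (LV 1)) ([], e)"
  unfolding sat_id_def sat_q_def holds_eq_def
proof (intro allI impI)
  fix u :: "nat \<Rightarrow> real \<times> real"
  assume q: "0 < q" and e: "\<forall>v. (\<forall>i. v i \<in> carrier (LV q)) \<longrightarrow> (\<forall>e\<in>set (fst ([], e)). eval (LV q) v (fst e) = eval (LV q) v (snd e)) \<longrightarrow>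
           eval (LV q) v (fst (snd ([], e))) = eval (LV q) v (snd (snd ([], e)))"
   and u: "\<forall>i. u i \<in> carrier (prod_alg (LV q) (LV 1))"
  have "\<forall>i. (fst \<circ> u) i \<in> carrier (LV q)" "\<forall>i. (snd \<circ> u) i \<in> carrier (LV q)"
    using u LV1_sub[OF q] by (force simp: prod_alg_def mem_Times_iff)+
  then show "eval (prod_alg (LV q) (LV 1)) u (fst (snd ([], e))) = eval (prod_alg (LV q) (LV 1)) u (snd (snd ([], e)))"
  proof -
    have "eval (LV q) (fst \<circ> u) (fst e) = eval (LV q) (fst \<circ> u) (snd e)"
      "eval (LV q) (snd \<circ> u) (fst e) = eval (LV q) (snd \<circ> u) (snd e)"
      using e \<open>\<forall>i. (fst \<circ> u) i \<in> carrier (LV q)\<close> \<open>\<forall>i. (snd \<circ> u) i \<in> carrier (LV q)\<close> by auto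
    then show ?thesis unfolding eval_prod by (metis eval_LV_indep snd_conv)
  qed
qed

lemma sat_nil: "sat_q A ([], (l, r)) \<Longrightarrow> (\<And>i. v i \<in> carrier A) \<Longrightarrow> eval A v l = eval A v r"
  unfolding sat_q_def holds_eq_def by auto

lemma fwd:
  fixes A :: "'a mvalg"
  assumes q: "0 < q" and Q: "in_Q A (prod_alg (LV q) (LV 1))"
  shows "is_MV A" "in_V A (LV q)" "sat_q A (qi5 q)"
proof -
  have ms: "mv_struct A" using Q by (simp add: in_Q_def)
  have sv: "sat_q A ([], e)" if "valid01 e" for e
    using Q valid01_B[OF that, of q 1] unfolding in_Q_def by blast
  define vv :: "'a \<Rightarrow> 'a \<Rightarrow> 'a \<Rightarrow> nat \<Rightarrow> 'a" where "vv = (\<lambda>x y z. (\<lambda>i::nat. if i = 0 then x else if i = 1 then y else z))"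
  have ax0: "eval A v l = eval A v r" if "valid01 (l, r)" "\<And>i. v i \<in> carrier A" for v l r
    using sat_nil[OF sv[OF that(1)] that(2)] .
  have ax: "eval A (vv x y z) l = eval A (vv x y z) r" if "valid01 (l, r)" "x \<in> carrier A" "y \<in> carrier A" "z \<in> carrier A" for x y z l r
    using that by (intro ax0) (auto simp: vv_def)
  have v1: "valid01 (Oplus (Var 0) (Oplus (Var 1) (Var 2)), Oplus (Oplus (Var 0) (Var 1)) (Var 2))"
    unfolding valid01_def
  proof (intro allI impI)
    fix v :: "nat \<Rightarrow> real" assume h: "\<forall>i. 0 \<le> v i \<and> v i \<le> 1"
    then have "0 \<le> v 0" "0 \<le> v 1" "0 \<le> v 2" by auto
    then show "eval (LV 1) v (fst (Oplus (Var 0) (Oplus (Var 1) (Var 2)), Oplus (Oplus (Var 0) (Var 1)) (Var 2))) =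
         eval (LV 1) v (snd (Oplus (Var 0) (Oplus (Var 1) (Var 2)), Oplus (Oplus (Var 0) (Var 1)) (Var 2)))"
      by (auto simp: min_def)
  qed
  have v2: "valid01 (Oplus (Var 0) (Var 1), Oplus (Var 1) (Var 0))"
    by (rule valid01I, simp add: min_def max_def split: if_splits, (linarith+)?)
  have v3: "valid01 (Oplus (Var 0) Zero, Var 0)"
    by (rule valid01I, simp add: min_def max_def split: if_splits, (linarith+)?)
  have v4: "valid01 (Neg (Neg (Var 0)), Var 0)"
    by (rule valid01I, simp add: min_def max_def split: if_splits, (linarith+)?)
  have v5: "valid01 (Oplus (Var 0) (Neg Zero), Neg Zero)"
    by (rule valid01I, simp add: min_def max_def split: if_splits, (linarith+)?)
  have v6: "valid01 (Oplus (Neg (Oplus (Neg (Var 0)) (Var 1))) (Var 1), Oplus (Neg (Oplus (Neg (Var 1)) (Var 0))) (Var 0))"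
    by (rule valid01I, simp add: min_def max_def split: if_splits, (linarith+)?)
  show "is_MV A" unfolding is_MV_def
  proof (intro conjI ballI)
    show "mv_struct A" by (rule ms)
    fix x y z assume xyz: "x \<in> carrier A" "y \<in> carrier A" "z \<in> carrier A"
    show "oplus A x (oplus A y z) = oplus A (oplus A x y) z" using ax[OF v1 xyz] by (simp add: vv_def)
    show "oplus A x y = oplus A y x" using ax[OF v2 xyz] by (simp add: vv_def)
    show "oplus A (neg A (oplus A (neg A x) y)) y = oplus A (neg A (oplus A (neg A y) x)) x"
      using ax[OF v6 xyz] by (simp add: vv_def)
  next
    fix x assume x: "x \<in> carrier A"
    show "oplus A x (zero A) = x" using ax[OF v3 x x x] by (simp add: vv_def)
    show "neg A (neg A x) = x" using ax[OF v4 x x x] by (simp add: vv_def)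
    show "oplus A x (neg A (zero A)) = neg A (zero A)" using ax[OF v5 x x x] by (simp add: vv_def)
  qed
  show "in_V A (LV q)" unfolding in_V_def
    using ms Q satid_B[OF q] by (auto simp: in_Q_def sat_id_def)
  have "sat_q (prod_alg (LV q) (LV 1)) (qi5 q)"
    unfolding sat_q_def qi5_def holds_eq_def
  proof (intro allI impI)
    fix u :: "nat \<Rightarrow> real \<times> real"
    assume u: "\<forall>i. u i \<in> carrier (prod_alg (LV q) (LV 1))"
      and pr: "\<forall>e\<in>set (fst ([(tmult q (Meet (Var 0) (Neg (Var 0))), One)], Join (Var 1) (Neg (Var 1)), One)).
          eval (prod_alg (LV q) (LV 1)) u (fst e) = eval (prod_alg (LV q) (LV 1)) u (snd e)"
    have s0: "snd (u 0) = 0 \<or> snd (u 0) = 1" using u LV1_car by (auto simp: prod_alg_def mem_Times_iff)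
    have "eval (LV 1) (snd \<circ> u) (tmult q (Meet (Var 0) (Neg (Var 0)))) = 1"
      using pr by (simp add: eval_prod)
    moreover have "eval (LV 1) (snd \<circ> u) (tmult q (Meet (Var 0) (Neg (Var 0)))) = 0"
      using s0 by (subst eval_LV_tmult) (auto simp: eval_LV_Meet)
    ultimately show "eval (prod_alg (LV q) (LV 1)) u (fst (snd ([(tmult q (Meet (Var 0) (Neg (Var 0))), One)], Join (Var 1) (Neg (Var 1)), One))) =
         eval (prod_alg (LV q) (LV 1)) u (snd (snd ([(tmult q (Meet (Var 0) (Neg (Var 0))), One)], Join (Var 1) (Neg (Var 1)), One)))"
      by simp
  qed
  then show "sat_q A (qi5 q)" using Q unfolding in_Q_def by blast
qed



lemma LV1_car': "carrier (LV (Suc 0)) = {0, 1}" using LV1_car by simp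

lemma tsubst_Var[simp]: "tsubst Var t = t" by (induction t) auto

lemma finite_tvars: "finite (tvars t)" by (induction t) auto

lemma eval_const_terms: "eval A v One = eval A w One" "eval A v Zero = eval A w Zero"
  by (simp_all add: One_def)

lemma back_dir:
  fixes A :: "'a mvalg"
  assumes q: "0 < q" and MV: "is_MV A" and V: "in_V A (LV q)" and qi: "sat_q A (qi5 q)"
    and BQ: "sat_q (prod_alg (LV q) (LV 1)) Q"
  shows "sat_q A Q"
proof -
  obtain ps s t where Qe: "Q = (ps, (s, t))" by (cases Q) auto
  have ms: "mv_struct A" using MV by (simp add: is_MV_def)
  have tr0: "eval A w l = eval A w r" if "sat_id (LV q) (l, r)" "\<forall>i. w i \<in> carrier A" for w l r
    using V that unfolding in_V_def sat_id_def sat_q_def holds_eq_def by auto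
  have ev_car: "eval A w t \<in> carrier A" if "\<forall>i. w i \<in> carrier A" for w t
    using eval_carrier[OF ms] that by blast
  have tr: "eval A w (tsubst \<sigma> l) = eval A w (tsubst \<sigma> r)" if "sat_id (LV q) (l, r)" "\<forall>i. w i \<in> carrier A" for w \<sigma> l r
  proof -
    have "\<forall>i. (\<lambda>i. eval A w (\<sigma> i)) i \<in> carrier A" using ev_car[OF that(2)] by blast
    then show ?thesis unfolding eval_tsubst by (rule tr0[OF that(1)])
  qed
  have trv: "eval A w (tsubst \<sigma> l) = eval A w (tsubst \<sigma> r)" if "valid01 (l, r)" "\<forall>i. w i \<in> carrier A" for w \<sigma> l r
    using tr[OF valid01_LV[OF that(1)] that(2)] .
  have LVq: "\<And>i. x i \<in> carrier (LV q) \<Longrightarrow> True" for x by simp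
  show ?thesis unfolding sat_q_def Qe fst_conv snd_conv
  proof (intro allI impI)
    fix v assume v: "\<forall>i. v i \<in> carrier A" and pr: "\<forall>e\<in>set ps. holds_eq A v e"
    have L1: "sat_id (LV q) (eqt q (Var 0) (Var 0), One)"
      unfolding sat_id_def sat_q_def holds_eq_def using ev_eqt[OF q] by auto
    have eq1: "eval A v (eqt q a b) = eval A v One" if "eval A v a = eval A v b" for a b
    proof -
      have "eval A v (eqt q a b) = eval A v (tsubst (\<lambda>i. if i = 0 then a else b) (eqt q (Var 0) (Var 1)))" by simp
      also have "\<dots> = eval A v (tsubst (\<lambda>i. a) (eqt q (Var 0) (Var 1)))"
        by (rule eval_cong_sub) (use that in auto)
      also have "\<dots> = eval A v (tsubst (\<lambda>i. a) (eqt q (Var 0) (Var 0)))" by simp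
      also have "\<dots> = eval A v (tsubst (\<lambda>i. a) One)" by (rule tr[OF L1 v])
      finally show ?thesis by simp
    qed
    have L2: "sat_id (LV q) (Var 0, ite (eqt q (Var 0) (Var 1)) (Var 1) (Var 0))"
      unfolding sat_id_def sat_q_def holds_eq_def
    proof (intro allI impI)
      fix x :: "nat \<Rightarrow> real" assume x: "\<forall>i. x i \<in> carrier (LV q)"
      then show "eval (LV q) x (fst (snd ([], Var 0, ite (eqt q (Var 0) (Var 1)) (Var 1) (Var 0)))) =
         eval (LV q) x (snd (snd ([], Var 0, ite (eqt q (Var 0) (Var 1)) (Var 1) (Var 0))))"
        using ev_ite[OF q, of x "eqt q (Var 0) (Var 1)" "Var 1" "Var 0"] ev_eqt[OF q, of x] by auto
    qed
    have L3: "valid01 (ite One (Var 1) (Var 0), Var 1)"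
      by (rule valid01I) (auto simp: ite_def Join_def Meet_def One_def min_def)
    have eq2: "eval A v a = eval A v b" if "eval A v (eqt q a b) = eval A v One" for a b
    proof -
      let ?\<sigma> = "\<lambda>i. if i = 0 then a else b"
      have "eval A v a = eval A v (tsubst ?\<sigma> (Var 0))" by simp
      also have "\<dots> = eval A v (tsubst ?\<sigma> (ite (eqt q (Var 0) (Var 1)) (Var 1) (Var 0)))"
        by (rule tr[OF L2 v])
      also have "\<dots> = eval A v (tsubst (\<lambda>i. if i = 2 then eqt q a b else if i = 1 then b else a) (ite (Var 2) (Var 1) (Var 0)))"
        by simp
      also have "\<dots> = eval A v (tsubst (\<lambda>i. if i = 2 then One else if i = 1 then b else a) (ite (Var 2) (Var 1) (Var 0)))"
        by (rule eval_cong_sub) (use that in auto)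
      also have "\<dots> = eval A v (tsubst ?\<sigma> (ite One (Var 1) (Var 0)))" by simp
      also have "\<dots> = eval A v (tsubst ?\<sigma> (Var 1))" by (rule trv[OF L3 v])
      finally show ?thesis by simp
    qed
    have L4: "valid01 (Meet One One, One)"
      by (rule valid01I) (auto simp: Join_def Meet_def One_def min_def)
    have pt1: "eval A v (Pt q ps') = eval A v One" if "\<forall>e\<in>set ps'. holds_eq A v e" for ps'
      using that
    proof (induction ps')
      case Nil then show ?case by simp
    next
      case (Cons p ps')
      have "eval A v (Pt q (p # ps')) = eval A v (tsubst (\<lambda>i. if i = 0 then eqt q (fst p) (snd p) else Pt q ps') (Meet (Var 0) (Var 1)))"
        by simp
      also have "\<dots> = eval A v (tsubst (\<lambda>i. One) (Meet (Var 0) (Var 1)))"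
        by (rule eval_cong_sub) (use Cons eq1 in \<open>auto simp: holds_eq_def\<close>)
      also have "\<dots> = eval A v (tsubst (\<lambda>i. One) (Meet One One))" by simp
      also have "\<dots> = eval A v (tsubst (\<lambda>i. One) One)" by (rule trv[OF L4 v])
      finally show ?case by simp
    qed
    have P1: "eval A v (Pt q ps) = eval A v One" using pt1 pr by blast
    have L5: "valid01 (Oplus (Neg One) (Var 0), Var 0)"
      by (rule valid01I) (auto simp: One_def min_def)
    have imp: "eval A v R = eval A v One" if "eval A v (Oplus (Neg (Pt q ps)) R) = eval A v One" for R
    proof -
      have "eval A v R = eval A v (tsubst (\<lambda>i. R) (Var 0))" by simp
      also have "\<dots> = eval A v (tsubst (\<lambda>i. R) (Oplus (Neg One) (Var 0)))" by (rule trv[OF L5 v, symmetric])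
      also have "\<dots> = eval A v (tsubst (\<lambda>i. if i = 1 then One else R) (Oplus (Neg (Var 1)) (Var 0)))"
        by (simp add: One_def)
      also have "\<dots> = eval A v (tsubst (\<lambda>i. if i = 1 then Pt q ps else R) (Oplus (Neg (Var 1)) (Var 0)))"
        by (rule eval_cong_sub) (use P1 in auto)
      also have "\<dots> = eval A v One" using that by simp
      finally show ?thesis .
    qed
    obtain N where N: "\<forall>p\<in>set ps. \<forall>i\<in>tvars (fst p) \<union> tvars (snd p). i < N"
    proof -
      have "finite (\<Union>p\<in>set ps. tvars (fst p) \<union> tvars (snd p))" by (simp add: finite_tvars)
      then obtain N where "\<forall>i\<in>(\<Union>p\<in>set ps. tvars (fst p) \<union> tvars (snd p)). i < N"
        using finite_nat_set_iff_bounded by blast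
      then show ?thesis using that by blast
    qed
    show "holds_eq A v (s, t)"
    proof (cases "\<exists>v2. (\<forall>i. v2 i \<in> carrier (LV 1)) \<and> (\<forall>p\<in>set ps. holds_eq (LV 1) v2 p)")
      case True
      then obtain v2 where v2: "\<forall>i. v2 i \<in> carrier (LV 1)" "\<forall>p\<in>set ps. holds_eq (LV 1) v2 p" by blast
      have I1: "sat_id (LV q) (Oplus (Neg (Pt q ps)) (eqt q s t), One)"
        unfolding sat_id_def sat_q_def
      proof (intro allI impI)
        fix x :: "nat \<Rightarrow> real" assume x: "\<forall>i. x i \<in> carrier (LV q)"
        have xx: "\<And>i. x i \<in> carrier (LV q)" using x by blast
        show "holds_eq (LV q) x (snd ([], Oplus (Neg (Pt q ps)) (eqt q s t), One))"
        proof (cases "\<forall>p\<in>set ps. holds_eq (LV q) x p")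
          case True
          define u where "u = (\<lambda>i. (x i, v2 i))"
          have uc: "\<forall>i. u i \<in> carrier (prod_alg (LV q) (LV 1))"
            using x v2 by (simp add: u_def prod_alg_def)
          have fu: "fst \<circ> u = x" "snd \<circ> u = v2" by (auto simp: u_def)
          have "\<forall>p\<in>set ps. holds_eq (prod_alg (LV q) (LV 1)) u p"
          proof
            fix p assume "p \<in> set ps"
            then have "holds_eq (LV q) x p" "holds_eq (LV 1) v2 p" using True v2(2) by blast+
            then show "holds_eq (prod_alg (LV q) (LV 1)) u p"
              unfolding holds_eq_def eval_prod fu by simp
          qed
          moreover have "(\<forall>e\<in>set (fst Q). holds_eq (prod_alg (LV q) (LV 1)) u e) \<longrightarrow> holds_eq (prod_alg (LV q) (LV 1)) u (snd Q)"
            using BQ uc unfolding sat_q_def by blast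
          ultimately have "holds_eq (prod_alg (LV q) (LV 1)) u (s, t)"
            unfolding Qe by simp
          then have "eval (LV q) x s = eval (LV q) x t" by (simp add: holds_eq_def eval_prod fu)
          then show ?thesis using x True
            by (simp add: holds_eq_def ev_Pt[OF q] ev_eqt[OF q])
        next
          case False
          then show ?thesis using x ev01[of q x "eqt q s t", OF q xx]
            by (auto simp add: holds_eq_def ev_Pt[OF q])
        qed
      qed
      have "eval A v (Oplus (Neg (Pt q ps)) (eqt q s t)) = eval A v One"
        using tr0[OF I1 v] .
      then have "eval A v (eqt q s t) = eval A v One" by (rule imp)
      from eq2[OF this] show ?thesis by (simp add: holds_eq_def)
    next
      case False
      have I2: "sat_id (LV q) (Oplus (Neg (Pt q ps)) (wt q (zt q N)), One)"
        unfolding sat_id_def sat_q_def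
      proof (intro allI impI)
        fix x :: "nat \<Rightarrow> real" assume x: "\<forall>i. x i \<in> carrier (LV q)"
        have xx: "\<And>i. x i \<in> carrier (LV q)" using x by blast
        show "holds_eq (LV q) x (snd ([], Oplus (Neg (Pt q ps)) (wt q (zt q N)), One))"
        proof (cases "\<forall>p\<in>set ps. holds_eq (LV q) x p")
          case True
          have "\<exists>j<N. x j \<noteq> 0 \<and> x j \<noteq> 1"
          proof (rule ccontr)
            assume "\<not> ?thesis"
            then have xb: "\<forall>j<N. x j = 0 \<or> x j = 1" by auto
            define v2 where "v2 = (\<lambda>j. if j < N then x j else 0)"
            have "\<forall>i. v2 i \<in> carrier (LV 1)" using xb by (auto simp: v2_def LV1_car')
            moreover have "\<forall>p\<in>set ps. holds_eq (LV 1) v2 p"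
            proof
              fix p assume p: "p \<in> set ps"
              have "eval (LV 1) v2 (fst p) = eval (LV 1) x (fst p)" "eval (LV 1) v2 (snd p) = eval (LV 1) x (snd p)"
                using N p by (auto intro!: eval_vars simp: v2_def)
              then show "holds_eq (LV 1) v2 p" using True p
                by (simp add: holds_eq_def) (metis eval_LV_indep)
            qed
            ultimately show False using False by blast
          qed
          then have "eval (LV q) x (zt q N) \<noteq> 0 \<and> eval (LV q) x (zt q N) \<noteq> 1"
            by (rule ev_zt[OF q xx])
          then show ?thesis using x True
            by (simp add: holds_eq_def ev_Pt[OF q] ev_wt[OF q])
        next
          case False
          then show ?thesis using x ev01[of q x "wt q (zt q N)", OF q xx]
            by (auto simp add: holds_eq_def ev_Pt[OF q])
        qed
      qed
      have "eval A v (Oplus (Neg (Pt q ps)) (wt q (zt q N))) = eval A v One"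
        using tr0[OF I2 v] .
      then have W: "eval A v (wt q (zt q N)) = eval A v One" by (rule imp)
      define z where "z = eval A v (zt q N)"
      define v' where "v' = (\<lambda>i::nat. z)"
      have v': "\<forall>i. v' i \<in> carrier A" using ev_car[OF v] by (simp add: v'_def z_def)
      have "eval A v' (wt q (Var 0)) = eval A v (tsubst (\<lambda>i. zt q N) (wt q (Var 0)))"
        by (simp only: eval_tsubst v'_def z_def)
      also have "\<dots> = eval A v (wt q (zt q N))" by simp
      also have "\<dots> = eval A v' One" using W by (simp add: One_def)
      finally have W': "eval A v' (wt q (Var 0)) = eval A v' One" .
      have "holds_eq A v' (Join (Var 1) (Neg (Var 1)), One)"
        using qi v' W' unfolding sat_q_def qi5_def by (auto simp: holds_eq_def wt_def)
      then have J: "eval A v' (Join (Var 0) (Neg (Var 0))) = eval A v' One"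
        by (simp add: holds_eq_def Join_def v'_def)
      have L6: "valid01 (wt q (Var 0), tmult q (Neg (Join (Var 0) (Neg (Var 0)))))"
        unfolding wt_def
      proof (rule valid01I)
        fix w :: "nat \<Rightarrow> real" assume "0 \<le> w 0" "w 0 \<le> 1"
        then show "eval (LV 1) w (fst (tmult q (Meet (Var 0) (Neg (Var 0))), tmult q (Neg (Join (Var 0) (Neg (Var 0)))))) =
            eval (LV 1) w (snd (tmult q (Meet (Var 0) (Neg (Var 0))), tmult q (Neg (Join (Var 0) (Neg (Var 0))))))"
          by (simp add: eval_LV_tmult eval_LV_Meet eval_LV_Join)
             (simp add: Join_def min_def max_def)
      qed
      have L7: "valid01 (tmult q (Neg One), Zero)"
        by (rule valid01I) (simp add: eval_LV_tmult One_def)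
      have ZO: "eval A v' Zero = eval A v' One"
      proof -
        have "eval A v' One = eval A v' (tsubst Var (wt q (Var 0)))" using W' by (simp add: eval_tsubst)
        also have "\<dots> = eval A v' (tsubst Var (tmult q (Neg (Join (Var 0) (Neg (Var 0))))))"
          by (rule trv[OF L6 v'])
        also have "\<dots> = eval A v' (tsubst (\<lambda>i. Join (Var 0) (Neg (Var 0))) (tmult q (Neg (Var 0))))"
          by simp
        also have "\<dots> = eval A v' (tsubst (\<lambda>i. One) (tmult q (Neg (Var 0))))"
          by (rule eval_cong_sub) (use J in auto)
        also have "\<dots> = eval A v' (tsubst (\<lambda>i. One) Zero)"
          using trv[OF L7 v', of Var] by simp
        finally show ?thesis by simp
      qed
      have L8: "valid01 (Oplus (Var 0) Zero, Var 0)" by (rule valid01I) (simp add: min_def)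
      have L9: "valid01 (Oplus (Var 0) One, One)" by (rule valid01I) (simp add: min_def One_def)
      have all1: "y = neg A (zero A)" if y: "y \<in> carrier A" for y
      proof -
        let ?w = "\<lambda>i::nat. y"
        have wc: "\<forall>i. ?w i \<in> carrier A" using y by simp
        have "y = eval A ?w (tsubst Var (Oplus (Var 0) Zero))"
          using trv[OF L8 wc, of Var] by simp
        also have "\<dots> = eval A ?w (tsubst (\<lambda>i. if i = 0 then Var 0 else Zero) (Oplus (Var 0) (Var 1)))" by simp
        also have "\<dots> = eval A ?w (tsubst (\<lambda>i. if i = 0 then Var 0 else One) (Oplus (Var 0) (Var 1)))"
          by (rule eval_cong_sub) (use ZO in \<open>auto simp: One_def\<close>)
        also have "\<dots> = eval A ?w (tsubst Var (Oplus (Var 0) One))" by simp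
        also have "\<dots> = eval A ?w (tsubst Var One)" by (rule trv[OF L9 wc])
        finally show ?thesis by (simp add: One_def)
      qed
      show ?thesis unfolding holds_eq_def fst_conv snd_conv
        using all1[OF ev_car[OF v, of s]] all1[OF ev_car[OF v, of t]] by simp
    qed
  qed
qed


theorem theorem5p6:
  fixes q :: nat and e :: mveq
  assumes "prime q"
    and "tvars (fst e) \<union> tvars (snd e) \<subseteq> {0}"
    and "\<And>(A :: 'a mvalg). is_MV A \<Longrightarrow> (sat_id A e \<longleftrightarrow> in_V A (LV q))"
  shows "\<forall>(A :: 'a mvalg). in_Q A (prod_alg (LV q) (LV 1)) \<longleftrightarrow>
           (is_MV A \<and> sat_id A e \<and> sat_q A (qi5 q))"
proof (intro allI iffI)
  have q: "0 < q" using assms(1) prime_gt_0_nat by blast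
  fix A :: "'a mvalg"
  {
    assume Q: "in_Q A (prod_alg (LV q) (LV 1))"
    show "is_MV A \<and> sat_id A e \<and> sat_q A (qi5 q)"
      using fwd[OF q Q] assms(3) by blast
  }
  {
    assume R: "is_MV A \<and> sat_id A e \<and> sat_q A (qi5 q)"
    then have V: "in_V A (LV q)" using assms(3) by blast
    have ms: "mv_struct A" using R by (simp add: is_MV_def)
    show "in_Q A (prod_alg (LV q) (LV 1))"
      unfolding in_Q_def using ms back_dir[OF q _ V] R by blast
  }
qed

end
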